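(* Let $X$ be a random vector in $\mathbb{R}^n$ with distribution $p_X$, let $f_{\boldsymbol\eta}:\mathbb{R}^n\to\mathbb{R}^m$ be a deterministic function depending on a parameter $\boldsymbol\eta\in\mathbb{R}^d$, let $t>0$, and let $Z_t\sim\mathcal N(\mathbf 0,t\mathbf I_m)$ be independent of $X$. Define the channel output $Y_t=f_{\boldsymbol\eta}(X)+Z_t$, with marginal density $p_{Y_t,\boldsymbol\eta}$, and its marginal score $s_{Y_t}(\mathbf y)=\nabla_{\mathbf y}\log p_{Y_t,\boldsymbol\eta}(\mathbf y)$. Under standard regularity conditions ($f_{\boldsymbol\eta}$ differentiable with respect to $\boldsymbol\eta$, and differentiation with respect to $\boldsymbol\eta$ may be exchanged with expectation and integration), the gradient of the mutual information with respect to $\boldsymbol\eta$ is $$\nabla_{\boldsymbol\eta} I(X;Y_t) = -\mathbb{E}_{X,Z_t}\!\left[ Df_{\boldsymbol\eta}(X)^\top\, s_{Y_t}\big(f_{\boldsymbol\eta}(X)+Z_t\big)\right],$$ where $Df_{\boldsymbol\eta}(\mathbf x)\in\mathbb{R}^{m\times d}$ denotes the Jacobian of $\boldsymbol\eta\mapsto f_{\boldsymbol\eta}(\mathbf x)$ with respect to $\boldsymbol\eta$, i.e. $[Df_{\boldsymbol\eta}(\mathbf x)]_{ij}=\partial f_{\boldsymbol\eta,i}(\mathbf x)/\partial\eta_j$.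
   Context: $I(\cdot;\cdot)$ denotes mutual information (natural logarithms). The marginal density $p_{Y_t,\boldsymbol\eta}$ of $Y_t$ depends on $\boldsymbol\eta$ through $f_{\boldsymbol\eta}$. *)

theory Defs
  imports "HOL-Analysis.Analysis" "HOL-Probability.Probability"
begin

definition gauss_dens :: "real \<Rightarrow> real^'m \<Rightarrow> real" where
  "gauss_dens t z = (2 * pi * t) powr (- real CARD('m) / 2) * exp (- (norm z)\<^sup>2 / (2 * t))"

definition marg_dens ::
  "real \<Rightarrow> (real^'d \<Rightarrow> real^'n \<Rightarrow> real^'m) \<Rightarrow> (real^'n) measure \<Rightarrow> real^'d \<Rightarrow> real^'m \<Rightarrow> real" where
  "marg_dens t f PX eta y = (\<integral>x. gauss_dens t (y - f eta x) \<partial>PX)"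

definition score ::
  "real \<Rightarrow> (real^'d \<Rightarrow> real^'n \<Rightarrow> real^'m) \<Rightarrow> (real^'n) measure \<Rightarrow> real^'d \<Rightarrow> real^'m \<Rightarrow> real^'m" where
  "score t f PX eta y = (SOME s. GDERIV (\<lambda>u. ln (marg_dens t f PX eta u)) y :> s)"

text \<open>Regularity: differentiation in the parameter theta (at theta = q) may be exchanged
  with integration against N, for the family F.\<close>
definition diff_under_integral ::
  "'b measure \<Rightarrow> ('p::euclidean_space \<Rightarrow> 'b \<Rightarrow> real) \<Rightarrow> 'p \<Rightarrow> bool" where
  "diff_under_integral N F q \<longleftrightarrow>
     (\<forall>D. (\<forall>w\<in>space N. ((\<lambda>\<theta>. F \<theta> w) has_derivative D w) (at q)) \<longrightarrow>
        (\<forall>h. integrable N (\<lambda>w. D w h)) \<and>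
        ((\<lambda>\<theta>. \<integral>w. F \<theta> w \<partial>N) has_derivative (\<lambda>h. \<integral>w. D w h \<partial>N)) (at q))"

end

theory Submission
  imports Defs
begin

lemma gauss_alt: "gauss_dens t z = (2 * pi * t) powr (- real CARD('m) / 2) * exp ((- 1 / (2 * t)) * (z \<bullet> z))" for z :: "real^'m"
  by (simp add: gauss_dens_def power2_norm_eq_inner)
lemma gauss_deriv: "((gauss_dens t :: real^'m \<Rightarrow> real) has_derivative (\<lambda>h. - gauss_dens t z * ((z \<bullet> h) / t))) (at z)"
  unfolding gauss_alt[abs_def]
  apply (rule derivative_eq_intros refl)+
  apply (simp add: inner_commute field_simps)
  done
lemma gauss_pos: "t > 0 \<Longrightarrow> gauss_dens t z > 0"
  by (simp add: gauss_dens_def)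
lemma gauss_le: "t > 0 \<Longrightarrow> gauss_dens t (z::real^'m) \<le> (2 * pi * t) powr (- real CARD('m) / 2)"
  by (simp add: gauss_dens_def)
lemma gauss_cont: "continuous_on UNIV (gauss_dens t :: real^'m \<Rightarrow> real)"
  unfolding gauss_alt[abs_def] by (intro continuous_intros)
lemma gauss_meas[measurable]: "gauss_dens t \<in> borel_measurable borel"
  using gauss_cont borel_measurable_continuous_onI by blast

lemma lborel_integral_translate:
  fixes F :: "'a::euclidean_space \<Rightarrow> real"
  assumes [measurable]: "F \<in> borel_measurable borel"
  shows "(\<integral>x. F (x + c) \<partial>lborel) = (\<integral>x. F x \<partial>lborel)"
proof -
  have "(\<integral>x. F x \<partial>lborel) = (\<integral>x. F x \<partial>distr lborel borel ((+) c))"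
    by (simp add: lborel_distr_plus)
  also have "\<dots> = (\<integral>x. F (c + x) \<partial>lborel)"
    by (subst integral_distr) auto
  finally show ?thesis by (simp add: add.commute)
qed

lemma lborel_nn_integral_translate:
  fixes F :: "'a::euclidean_space \<Rightarrow> ennreal"
  assumes [measurable]: "F \<in> borel_measurable borel"
  shows "(\<integral>\<^sup>+x. F (x + c) \<partial>lborel) = (\<integral>\<^sup>+x. F x \<partial>lborel)"
proof -
  have "(\<integral>\<^sup>+x. F x \<partial>lborel) = (\<integral>\<^sup>+x. F x \<partial>distr lborel borel ((+) c))"
    by (simp add: lborel_distr_plus)
  also have "\<dots> = (\<integral>\<^sup>+x. F (c + x) \<partial>lborel)"
    by (subst nn_integral_distr) auto
  finally show ?thesis by (simp add: add.commute)
qed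

lemma deriv_meas:
  fixes F :: "'p::euclidean_space \<Rightarrow> 'b \<Rightarrow> real"
  assumes D: "\<And>x. x \<in> space N \<Longrightarrow> ((\<lambda>\<theta>. F \<theta> x) has_derivative D x) (at q)"
    and meas: "\<And>\<theta>. F \<theta> \<in> borel_measurable N"
  shows "(\<lambda>x. D x h) \<in> borel_measurable N"
proof (rule borel_measurable_LIMSEQ_real)
  let ?u = "\<lambda>n x. (F (q + (1 / Suc n) *\<^sub>R h) x - F q x) / (1 / Suc n)"
  show "?u n \<in> borel_measurable N" for n
    using meas by measurable
  fix x assume x: "x \<in> space N"
  have lin: "linear (D x)" using D[OF x] by (simp add: has_derivative_linear)
  have "((\<lambda>r. q + r *\<^sub>R h) has_derivative (\<lambda>r. r *\<^sub>R h)) (at 0)"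
    by (rule derivative_eq_intros refl)+ simp
  from has_derivative_compose[OF this, of "\<lambda>\<theta>. F \<theta> x" "D x"] D[OF x]
  have "((\<lambda>r. F (q + r *\<^sub>R h) x) has_derivative (\<lambda>r. D x (r *\<^sub>R h))) (at 0)" by simp
  moreover have "(\<lambda>r. D x (r *\<^sub>R h)) = (*) (D x h)"
    using lin by (auto simp: linear_scale fun_eq_iff)
  ultimately have "((\<lambda>r. F (q + r *\<^sub>R h) x) has_field_derivative D x h) (at 0)"
    by (simp add: has_field_derivative_def)
  then have lim: "((\<lambda>r. (F (q + r *\<^sub>R h) x - F q x) / r) \<longlongrightarrow> D x h) (at 0)"
    by (simp add: has_field_derivative_iff)
  have "filterlim (\<lambda>n::nat. 1 / real (Suc n)) (at (0::real)) sequentially"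
  proof (rule filterlim_atI)
    show "((\<lambda>n::nat. 1 / real (Suc n)) \<longlongrightarrow> 0) sequentially"
      using LIMSEQ_inverse_real_of_nat by (simp add: inverse_eq_divide)
    show "\<forall>\<^sub>F n in sequentially. 1 / real (Suc n) \<noteq> 0" by simp
  qed
  from filterlim_compose[OF lim this]
  show "(\<lambda>n. ?u n x) \<longlonglongrightarrow> D x h" by (simp add: o_def)
qed

lemma gderiv_exists:
  fixes F :: "'a::euclidean_space \<Rightarrow> real"
  assumes "F differentiable (at y)"
  shows "\<exists>s. GDERIV F y :> s"
proof -
  from assms obtain D where D: "(F has_derivative D) (at y)" by (auto simp: differentiable_def)
  then have lin: "linear D" by (simp add: has_derivative_linear)
  define s where "s = (\<Sum>b\<in>Basis. D b *\<^sub>R b)"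
  have "D h = h \<bullet> s" for h
  proof -
    have "D h = D (\<Sum>b\<in>Basis. (h \<bullet> b) *\<^sub>R b)" by (simp add: euclidean_representation)
    also have "\<dots> = (\<Sum>b\<in>Basis. (h \<bullet> b) * D b)" using lin by (simp add: linear_sum linear_scale)
    also have "\<dots> = h \<bullet> s" by (simp add: s_def inner_sum_right mult.commute)
    finally show ?thesis .
  qed
  then have "D = (\<lambda>h. h \<bullet> s)" by auto
  with D show ?thesis unfolding gderiv_def by auto
qed



lemma nn_integral_scale:
  fixes F :: "'a::euclidean_space \<Rightarrow> ennreal"
  assumes [measurable]: "F \<in> borel_measurable borel" and c: "c \<noteq> 0"
  shows "(\<integral>\<^sup>+x. F x \<partial>lborel) = ennreal (\<bar>c\<bar>^DIM('a)) * (\<integral>\<^sup>+x. F (c *\<^sub>R x) \<partial>lborel)"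
proof -
  have eq: "(lborel::'a measure) = density (distr lborel borel (\<lambda>x. 0 + c *\<^sub>R x)) (\<lambda>_. \<bar>c\<bar>^DIM('a))"
    by (rule lborel_affine[OF c, where t="0::'a"])
  have "(\<integral>\<^sup>+x. F x \<partial>lborel) = (\<integral>\<^sup>+x. F x \<partial>density (distr lborel borel (\<lambda>x. 0 + c *\<^sub>R x)) (\<lambda>_. \<bar>c\<bar>^DIM('a)))"
    by (rule arg_cong[OF eq])
  also have "\<dots> = ennreal (\<bar>c\<bar>^DIM('a)) * (\<integral>\<^sup>+x. F (c *\<^sub>R x) \<partial>lborel)"
    by (simp add: nn_integral_density nn_integral_distr nn_integral_cmult)
  finally show ?thesis .
qed

lemma gauss_ln_integrable:
  fixes t :: real
  assumes t: "t > 0" and fin: "(\<integral>\<^sup>+z. ennreal (gauss_dens t (z::real^'m)) \<partial>lborel) < \<infinity>"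
  shows "integrable lborel (\<lambda>z::real^'m. gauss_dens t z * ln (gauss_dens t z))"
proof -
  let ?g = "gauss_dens t :: real^'m \<Rightarrow> real"
  define K where "K = (2 * pi * t) powr (- real CARD('m) / 2)"
  define c :: real where "c = 1 / sqrt 2"
  have K: "K > 0" using t by (simp add: K_def)
  have c: "c \<noteq> 0" "c > 0" by (auto simp: c_def)
  have gi: "integrable lborel ?g"
    using fin by (intro integrableI_nonneg) (auto intro: less_imp_le[OF gauss_pos[OF t]])
  have "(\<integral>\<^sup>+x. ennreal (?g x) \<partial>lborel) = ennreal (\<bar>c\<bar>^DIM(real^'m)) * (\<integral>\<^sup>+x. ennreal (?g (c *\<^sub>R x)) \<partial>lborel)"
    by (rule nn_integral_scale[OF _ c(1)]) simp
  with fin c have fin2: "(\<integral>\<^sup>+x. ennreal (?g (c *\<^sub>R x)) \<partial>lborel) < \<infinity>"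
    by (auto simp: ennreal_mult_less_top top_unique ennreal_mult_eq_top_iff split: if_splits)
  have gi2: "integrable lborel (\<lambda>x. ?g (c *\<^sub>R x))"
    using fin2 by (intro integrableI_nonneg) (auto intro: less_imp_le[OF gauss_pos[OF t]])
  have bound: "norm (?g z * ln (?g z)) \<le> norm (\<bar>ln K\<bar> * ?g z + 2 * ?g (c *\<^sub>R z))" for z
  proof -
    define a where "a = (z \<bullet> z) / (2 * t)"
    have a: "a \<ge> 0" using t by (simp add: a_def)
    have g: "?g z = K * exp (- a)" by (simp add: gauss_alt K_def a_def)
    have gc: "?g (c *\<^sub>R z) = K * exp (- a / 2)"
      using t by (simp add: gauss_alt K_def a_def c_def power2_eq_square[symmetric] field_simps)
    have lng: "ln (?g z) = ln K - a" using K by (simp add: g ln_mult)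
    have "a / 2 \<le> exp (a / 2)" using exp_ge_add_one_self[of "a/2"] by linarith
    then have "a * exp (- a) \<le> 2 * exp (a / 2) * exp (- a)" by (intro mult_right_mono) auto
    also have "\<dots> = 2 * exp (- a / 2)" by (simp add: exp_add[symmetric])
    finally have ae: "a * exp (- a) \<le> 2 * exp (- a / 2)" .
    have "\<bar>?g z * ln (?g z)\<bar> = K * exp (- a) * \<bar>ln K - a\<bar>" using K unfolding lng by (simp add: g abs_mult)
    also have "\<dots> \<le> K * exp (- a) * (\<bar>ln K\<bar> + a)" using K a by (intro mult_left_mono) auto
    also have "\<dots> = \<bar>ln K\<bar> * (K * exp (-a)) + K * (a * exp (- a))" by (simp add: algebra_simps)
    also have "\<dots> \<le> \<bar>ln K\<bar> * (K * exp (-a)) + K * (2 * exp (- a / 2))" using K ae by simp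
    finally show ?thesis using K by (simp add: g gc)
  qed
  show ?thesis
    by (rule Bochner_Integration.integrable_bound[OF _ _ AE_I2[OF bound]])
       (use gi gi2 in auto)
qed
lemma vec_nth_meas[measurable]: "(\<lambda>v::real^'k. v $ i) \<in> borel_measurable borel"
  by (intro borel_measurable_continuous_onI linear_continuous_on bounded_linear_vec_nth)

lemma dui_apply:
  assumes "diff_under_integral N F q"
    and "\<And>w. w \<in> space N \<Longrightarrow> ((\<lambda>\<theta>. F \<theta> w) has_derivative D w) (at q)"
  shows "(\<forall>h. integrable N (\<lambda>w. D w h)) \<and>
    ((\<lambda>\<theta>. \<integral>w. F \<theta> w \<partial>N) has_derivative (\<lambda>h. \<integral>w. D w h \<partial>N)) (at q)"
  using assms unfolding diff_under_integral_def by blast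


theorem proposition1:
  fixes M :: "'a measure"
    and X :: "'a \<Rightarrow> real^'n"
    and Z :: "'a \<Rightarrow> real^'m"
    and f :: "real^'d \<Rightarrow> real^'n \<Rightarrow> real^'m"
    and Df :: "real^'d \<Rightarrow> real^'n \<Rightarrow> real^'d \<Rightarrow> real^'m"
    and t :: real
  defines "PX \<equiv> distr M borel X"
  defines "p \<equiv> marg_dens t f PX"
  defines "s \<equiv> score t f PX"
  assumes M: "prob_space M"
    and t: "t > 0"
    and X: "X \<in> borel_measurable M"
    and Z: "distributed M lborel Z (\<lambda>z. ennreal (gauss_dens t z))"
    and indep: "prob_space.indep_set M
        (sigma_sets (space M) {X -` A \<inter> space M | A. A \<in> sets (borel :: (real^'n) measure)})
        (sigma_sets (space M) {Z -` A \<inter> space M | A. A \<in> sets (borel :: (real^'m) measure)})"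
    and f_meas: "\<And>\<eta>. f \<eta> \<in> borel_measurable borel"
    and f_diff: "\<And>\<eta> x. ((\<lambda>\<theta>. f \<theta> x) has_derivative Df \<eta> x) (at \<eta>)"
    and p_diff_y: "\<And>\<eta> y. (\<lambda>u. ln (p \<eta> u)) differentiable (at y)"
    and ex_p: "\<And>\<eta> y. diff_under_integral PX (\<lambda>\<theta> x. gauss_dens t (y - f \<theta> x)) \<eta>"
    and ex_int_p: "\<And>\<eta>. diff_under_integral lborel (\<lambda>\<theta> y. p \<theta> y) \<eta>"
    and ex_ent: "\<And>\<eta>. diff_under_integral lborel (\<lambda>\<theta> y. p \<theta> y * ln (p \<theta> y)) \<eta>"
    and int_ent: "\<And>\<eta>. integrable lborel (\<lambda>y. p \<eta> y * ln (p \<eta> y))"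
    and ex_shift1: "\<And>\<eta> a. diff_under_integral lborel (\<lambda>b y. gauss_dens t (y - b) * ln (p \<eta> y)) a"
    and ex_shift2: "\<And>\<eta> a. diff_under_integral lborel (\<lambda>b u. gauss_dens t u * ln (p \<eta> (u + b))) a"
    and fubini: "\<And>\<eta> h. integrable (PX \<Otimes>\<^sub>M lborel)
        (\<lambda>(x, y). gauss_dens t (y - f \<eta> x) * (((y - f \<eta> x) \<bullet> Df \<eta> x h) / t) * ln (p \<eta> y))"
    and int_grad: "\<And>\<eta>. integrable M
        (\<lambda>\<omega>. transpose (matrix (Df \<eta> (X \<omega>))) *v s \<eta> (f \<eta> (X \<omega>) + Z \<omega>))"
  shows "GDERIV (\<lambda>\<eta>. prob_space.mutual_information M (exp 1) borel borel X
                        (\<lambda>\<omega>. f \<eta> (X \<omega>) + Z \<omega>)) \<eta> :>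
           - (\<integral>\<omega>. transpose (matrix (Df \<eta> (X \<omega>))) *v s \<eta> (f \<eta> (X \<omega>) + Z \<omega>) \<partial>M)"
proof -
  interpret M: prob_space M by (rule M)
  note [measurable] = X f_meas
  have Zm[measurable]: "Z \<in> borel_measurable M"
    using distributed_measurable[OF Z] by (simp add: measurable_def)
  have PZ: "distr M lborel Z = density lborel (\<lambda>z. ennreal (gauss_dens t z))"
    using Z by (simp add: distributed_def)
  have PZb: "distr M borel Z = density lborel (\<lambda>z. ennreal (gauss_dens t z))"
    unfolding PZ[symmetric] by (rule distr_cong) auto
  have PX_ps: "prob_space PX" unfolding PX_def by (rule M.prob_space_distr[OF X])
  interpret PX: prob_space PX by fact
  have sets_PX[measurable_cong, simp]: "sets PX = sets borel" by (simp add: PX_def)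
  have space_PX[simp]: "space PX = UNIV" by (simp add: PX_def)
  have PX_UNIV[simp]: "emeasure PX UNIV = 1" using PX.emeasure_space_1 by simp
  have PX_UNIV'[simp]: "measure PX UNIV = 1" using PX.prob_space by simp
  interpret PXL: pair_sigma_finite PX lborel ..
  have PZb_ps: "prob_space (distr M borel Z)" by (rule M.prob_space_distr) simp
  interpret PZ: prob_space "distr M borel Z" by fact
  interpret PXZ: pair_sigma_finite PX "distr M borel Z" ..
  define K where "K = (2 * pi * t) powr (- real CARD('m) / 2)"
  have gpos[simp]: "\<And>z. gauss_dens t z > 0" using t by (rule gauss_pos)
  have gnn[simp]: "\<And>z. gauss_dens t z \<ge> 0" by (simp add: less_imp_le)
  have gle: "\<And>z. gauss_dens t (z::real^'m) \<le> K" unfolding K_def using t by (rule gauss_le)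
  have g_nn_one: "(\<integral>\<^sup>+z. ennreal (gauss_dens t (z::real^'m)) \<partial>lborel) = 1"
  proof -
    have "(\<integral>\<^sup>+z. ennreal (gauss_dens t (z::real^'m)) \<partial>lborel) = emeasure (distr M lborel Z) UNIV"
      unfolding PZ by (subst emeasure_density) auto
    also have "\<dots> = 1" by (subst emeasure_distr) (auto simp: M.emeasure_space_1)
    finally show ?thesis .
  qed
  have gln_int: "integrable lborel (\<lambda>z::real^'m. gauss_dens t z * ln (gauss_dens t z))"
    by (rule gauss_ln_integrable[OF t]) (simp add: g_nn_one)
  have p_eq: "p \<theta> y = (\<integral>x. gauss_dens t (y - f \<theta> x) \<partial>PX)" for \<theta> y
    by (simp add: p_def marg_dens_def)
  have pint: "integrable PX (\<lambda>x. gauss_dens t (y - f \<theta> x))" for \<theta> y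
    by (rule PX.integrable_const_bound[where B=K]) (auto intro!: AE_I2 simp: abs_of_pos[OF gpos] gle)
  have p_pos: "p \<theta> y > 0" for \<theta> y
  proof -
    have nn: "p \<theta> y \<ge> 0" unfolding p_eq by (rule Bochner_Integration.integral_nonneg) (simp add: less_imp_le[OF gpos])
    have "p \<theta> y \<noteq> 0"
    proof
      assume "p \<theta> y = 0"
      then have "AE x in PX. gauss_dens t (y - f \<theta> x) = 0"
        unfolding p_eq using pint by (subst (asm) integral_nonneg_eq_0_iff_AE) (auto intro: less_imp_le[OF gpos])
      then have "AE x in PX. False"
        by (rule AE_mp) (intro AE_I2 impI, metis less_irrefl gpos)
      then show False by (simp add: PX.AE_False)
    qed
    with nn show ?thesis by simp
  qed
  have p_nn[simp]: "0 \<le> p \<theta> y" for \<theta> y using p_pos[of \<theta> y] by simp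
  have p_ne[simp]: "p \<theta> y \<noteq> 0" for \<theta> y using p_pos[of \<theta> y] by simp
  have p_meas[measurable]: "p \<theta> \<in> borel_measurable borel" for \<theta>
    unfolding p_eq[abs_def] by measurable

  have ind: "\<And>a b. a \<in> sigma_sets (space M) {X -` A \<inter> space M | A. A \<in> sets (borel :: (real^'n) measure)} \<Longrightarrow>
      b \<in> sigma_sets (space M) {Z -` A \<inter> space M | A. A \<in> sets (borel :: (real^'m) measure)} \<Longrightarrow>
      M.prob (a \<inter> b) = M.prob a * M.prob b"
    using indep unfolding M.indep_sets2_eq by blast
  have XZ: "distr M (borel \<Otimes>\<^sub>M borel) (\<lambda>\<omega>. (X \<omega>, Z \<omega>)) = PX \<Otimes>\<^sub>M distr M borel Z"
  proof (rule pair_measure_eqI[symmetric])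
    show "sigma_finite_measure PX" ..
    show "sigma_finite_measure (distr M borel Z)" ..
    show "sets (PX \<Otimes>\<^sub>M distr M borel Z) = sets (distr M (borel \<Otimes>\<^sub>M borel) (\<lambda>\<omega>. (X \<omega>, Z \<omega>)))"
      using sets_pair_measure_cong[OF sets_PX refl, of borel] by simp
    fix A B assume A: "A \<in> sets PX" and B: "B \<in> sets (distr M borel Z)"
    then have [measurable]: "A \<in> sets borel" "B \<in> sets borel" by auto
    have "emeasure (distr M (borel \<Otimes>\<^sub>M borel) (\<lambda>\<omega>. (X \<omega>, Z \<omega>))) (A \<times> B) =
        emeasure M ((\<lambda>\<omega>. (X \<omega>, Z \<omega>)) -` (A \<times> B) \<inter> space M)"
      by (rule emeasure_distr) auto
    also have "\<dots> = emeasure M ((X -` A \<inter> space M) \<inter> (Z -` B \<inter> space M))"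
      by (intro arg_cong[where f="emeasure M"]) auto
    also have "\<dots> = emeasure M (X -` A \<inter> space M) * emeasure M (Z -` B \<inter> space M)"
    proof -
      have "M.prob ((X -` A \<inter> space M) \<inter> (Z -` B \<inter> space M)) = M.prob (X -` A \<inter> space M) * M.prob (Z -` B \<inter> space M)"
      proof (rule ind)
        show "X -` A \<inter> space M \<in> sigma_sets (space M) {X -` A \<inter> space M | A. A \<in> sets (borel :: (real^'n) measure)}"
          by (rule sigma_sets.Basic) (use \<open>A \<in> sets borel\<close> in auto)
        show "Z -` B \<inter> space M \<in> sigma_sets (space M) {Z -` A \<inter> space M | A. A \<in> sets (borel :: (real^'m) measure)}"
          by (rule sigma_sets.Basic) (use \<open>B \<in> sets borel\<close> in auto)
      qed
      then show ?thesis by (simp add: M.emeasure_eq_measure ennreal_mult)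
    qed
    also have "\<dots> = emeasure PX A * emeasure (distr M borel Z) B" by (simp add: PX_def emeasure_distr)
    finally show "emeasure PX A * emeasure (distr M borel Z) B =
        emeasure (distr M (borel \<Otimes>\<^sub>M borel) (\<lambda>\<omega>. (X \<omega>, Z \<omega>))) (A \<times> B)" by simp
  qed
  have joint: "distr M (borel \<Otimes>\<^sub>M borel) (\<lambda>\<omega>. (X \<omega>, f \<theta> (X \<omega>) + Z \<omega>)) =
      density (PX \<Otimes>\<^sub>M lborel) (\<lambda>(x, y). ennreal (gauss_dens t (y - f \<theta> x)))" for \<theta>
  proof (rule measure_eqI)
    show "sets (distr M (borel \<Otimes>\<^sub>M borel) (\<lambda>\<omega>. (X \<omega>, f \<theta> (X \<omega>) + Z \<omega>))) =
      sets (density (PX \<Otimes>\<^sub>M lborel) (\<lambda>(x, y). ennreal (gauss_dens t (y - f \<theta> x))))"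
      by (simp add: sets_pair_measure_cong[OF sets_PX sets_lborel])
    fix A assume "A \<in> sets (distr M (borel \<Otimes>\<^sub>M borel) (\<lambda>\<omega>. (X \<omega>, f \<theta> (X \<omega>) + Z \<omega>)))"
    then have A[measurable]: "A \<in> sets (borel \<Otimes>\<^sub>M borel)" by simp
    have "emeasure (distr M (borel \<Otimes>\<^sub>M borel) (\<lambda>\<omega>. (X \<omega>, f \<theta> (X \<omega>) + Z \<omega>))) A =
        (\<integral>\<^sup>+\<omega>. indicator A (X \<omega>, f \<theta> (X \<omega>) + Z \<omega>) \<partial>M)"
    proof -
      have "(\<integral>\<^sup>+w. indicator A w \<partial>distr M (borel \<Otimes>\<^sub>M borel) (\<lambda>\<omega>. (X \<omega>, f \<theta> (X \<omega>) + Z \<omega>))) =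
          emeasure (distr M (borel \<Otimes>\<^sub>M borel) (\<lambda>\<omega>. (X \<omega>, f \<theta> (X \<omega>) + Z \<omega>))) A"
        by (rule nn_integral_indicator) simp
      then show ?thesis by (subst (asm) nn_integral_distr) auto
    qed
    also have "\<dots> = (\<integral>\<^sup>+xz. indicator A (fst xz, f \<theta> (fst xz) + snd xz) \<partial>distr M (borel \<Otimes>\<^sub>M borel) (\<lambda>\<omega>. (X \<omega>, Z \<omega>)))"
      by (subst nn_integral_distr) auto
    also have "\<dots> = (\<integral>\<^sup>+x. (\<integral>\<^sup>+z. indicator A (x, f \<theta> x + z) \<partial>distr M borel Z) \<partial>PX)"
      unfolding XZ using PZ.nn_integral_fst[of "\<lambda>xz. indicator A (fst xz, f \<theta> (fst xz) + snd xz)" PX] by simp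
    also have "\<dots> = (\<integral>\<^sup>+x. (\<integral>\<^sup>+z. ennreal (gauss_dens t z) * indicator A (x, f \<theta> x + z) \<partial>lborel) \<partial>PX)"
      unfolding PZb by (subst nn_integral_density) auto
    also have "\<dots> = (\<integral>\<^sup>+x. (\<integral>\<^sup>+y. ennreal (gauss_dens t (y - f \<theta> x)) * indicator A (x, y) \<partial>lborel) \<partial>PX)"
    proof (rule nn_integral_cong)
      fix x
      show "(\<integral>\<^sup>+z. ennreal (gauss_dens t z) * indicator A (x, f \<theta> x + z) \<partial>lborel) =
          (\<integral>\<^sup>+y. ennreal (gauss_dens t (y - f \<theta> x)) * indicator A (x, y) \<partial>lborel)"
        using lborel_nn_integral_translate[of "\<lambda>y. ennreal (gauss_dens t (y - f \<theta> x)) * indicator A (x, y)" "f \<theta> x"]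
        by (simp add: add.commute)
    qed
    also have "\<dots> = (\<integral>\<^sup>+xy. ennreal (gauss_dens t (snd xy - f \<theta> (fst xy))) * indicator A xy \<partial>(PX \<Otimes>\<^sub>M lborel))"
      using lborel.nn_integral_fst[of "\<lambda>xy. ennreal (gauss_dens t (snd xy - f \<theta> (fst xy))) * indicator A xy" PX] by simp
    also have "\<dots> = emeasure (density (PX \<Otimes>\<^sub>M lborel) (\<lambda>(x, y). ennreal (gauss_dens t (y - f \<theta> x)))) A"
      by (subst emeasure_density) (auto simp: split_beta' sets_pair_measure_cong[OF sets_PX sets_lborel])
    finally show "emeasure (distr M (borel \<Otimes>\<^sub>M borel) (\<lambda>\<omega>. (X \<omega>, f \<theta> (X \<omega>) + Z \<omega>))) A =
      emeasure (density (PX \<Otimes>\<^sub>M lborel) (\<lambda>(x, y). ennreal (gauss_dens t (y - f \<theta> x)))) A" .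
  qed
  have PY: "distr M borel (\<lambda>\<omega>. f \<theta> (X \<omega>) + Z \<omega>) = density lborel (\<lambda>y. ennreal (p \<theta> y))" for \<theta>
  proof (rule measure_eqI)
    fix A assume "A \<in> sets (distr M borel (\<lambda>\<omega>. f \<theta> (X \<omega>) + Z \<omega>))"
    then have A[measurable]: "A \<in> sets borel" by simp
    have sA[measurable]: "snd -` A \<in> sets ((borel :: (real^'n) measure) \<Otimes>\<^sub>M (borel :: (real^'m) measure))"
      proof -
      have "snd -` A \<inter> space ((borel :: (real^'n) measure) \<Otimes>\<^sub>M (borel :: (real^'m) measure)) \<in> sets ((borel :: (real^'n) measure) \<Otimes>\<^sub>M (borel :: (real^'m) measure))"
        by (rule measurable_sets[OF measurable_snd]) simp
      then show ?thesis by (simp add: space_pair_measure)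
    qed
    have Ydd: "distr M borel (\<lambda>\<omega>. f \<theta> (X \<omega>) + Z \<omega>) = distr (distr M (borel \<Otimes>\<^sub>M borel) (\<lambda>\<omega>. (X \<omega>, f \<theta> (X \<omega>) + Z \<omega>))) borel snd"
      by (subst distr_distr) (auto simp: o_def)
    have "emeasure (distr M borel (\<lambda>\<omega>. f \<theta> (X \<omega>) + Z \<omega>)) A =
        emeasure (density (PX \<Otimes>\<^sub>M lborel) (\<lambda>(x, y). ennreal (gauss_dens t (y - f \<theta> x)))) (snd -` A \<inter> space (PX \<Otimes>\<^sub>M lborel))"
      by (simp only: Ydd joint) (subst emeasure_distr, auto)
    also have "\<dots> = (\<integral>\<^sup>+xy. ennreal (gauss_dens t (snd xy - f \<theta> (fst xy))) * indicator A (snd xy) \<partial>(PX \<Otimes>\<^sub>M lborel))"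
      by (subst emeasure_density) (auto simp: split_beta' space_pair_measure intro!: nn_integral_cong split: split_indicator)
    also have "\<dots> = (\<integral>\<^sup>+y. (\<integral>\<^sup>+x. ennreal (gauss_dens t (y - f \<theta> x)) * indicator A y \<partial>PX) \<partial>lborel)"
      by (subst PXL.nn_integral_snd[symmetric]) auto
    also have "\<dots> = (\<integral>\<^sup>+y. ennreal (p \<theta> y) * indicator A y \<partial>lborel)"
    proof (rule nn_integral_cong)
      fix y
      have "(\<integral>\<^sup>+x. ennreal (gauss_dens t (y - f \<theta> x)) \<partial>PX) = ennreal (p \<theta> y)"
        unfolding p_eq using pint by (subst nn_integral_eq_integral) (auto intro: less_imp_le[OF gpos])
      then show "(\<integral>\<^sup>+x. ennreal (gauss_dens t (y - f \<theta> x)) * indicator A y \<partial>PX) = ennreal (p \<theta> y) * indicator A y"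
        by (simp add: nn_integral_multc)
    qed
    also have "\<dots> = emeasure (density lborel (\<lambda>y. ennreal (p \<theta> y))) A"
      by (subst emeasure_density) auto
    finally show "emeasure (distr M borel (\<lambda>\<omega>. f \<theta> (X \<omega>) + Z \<omega>)) A = emeasure (density lborel (\<lambda>y. ennreal (p \<theta> y))) A" .
  qed simp
  have p_nn_one: "(\<integral>\<^sup>+y. ennreal (p \<theta> y) \<partial>lborel) = 1" for \<theta>
  proof -
    have "(\<integral>\<^sup>+y. ennreal (p \<theta> y) \<partial>lborel) = emeasure (distr M borel (\<lambda>\<omega>. f \<theta> (X \<omega>) + Z \<omega>)) UNIV"
      unfolding PY by (subst emeasure_density) auto
    also have "\<dots> = 1" by (subst emeasure_distr) (auto simp: M.emeasure_space_1)
    finally show ?thesis .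
  qed
  have p_int: "integrable lborel (p \<theta>)" for \<theta>
    using p_nn_one[of \<theta>] by (intro integrableI_nonneg) (auto intro: less_imp_le[OF p_pos])
  have p_one: "(\<integral>y. p \<theta> y \<partial>lborel) = 1" for \<theta>
    using p_nn_one[of \<theta>] by (subst integral_eq_nn_integral) (auto intro: less_imp_le[OF p_pos])

  define CG where "CG = (\<integral>z. gauss_dens t (z::real^'m) * ln (gauss_dens t z) \<partial>lborel)"
  have MI: "M.mutual_information (exp 1) borel borel X (\<lambda>\<omega>. f \<theta> (X \<omega>) + Z \<omega>) =
      CG - (\<integral>y. p \<theta> y * ln (p \<theta> y) \<partial>lborel)" for \<theta>
  proof -
    let ?G = "\<lambda>xy. gauss_dens t (snd xy - f \<theta> (fst xy))"
    let ?P = "\<lambda>xy::(real^'n) \<times> (real^'m). p \<theta> (snd xy)"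
    have sfPY: "sigma_finite_measure (density lborel (\<lambda>y. ennreal (p \<theta> y)))"
      unfolding PY[symmetric] by (rule prob_space_imp_sigma_finite[OF M.prob_space_distr]) simp
    have "PX \<Otimes>\<^sub>M distr M borel (\<lambda>\<omega>. f \<theta> (X \<omega>) + Z \<omega>) =
        density PX (\<lambda>_. 1) \<Otimes>\<^sub>M density lborel (\<lambda>y. ennreal (p \<theta> y))"
      by (simp add: density_1 PY)
    also have "\<dots> = density (PX \<Otimes>\<^sub>M lborel) (\<lambda>(x, y). 1 * ennreal (p \<theta> y))"
      by (rule pair_measure_density) (auto simp: sfPY lborel.sigma_finite_measure_axioms)
    also have "\<dots> = density (PX \<Otimes>\<^sub>M lborel) (\<lambda>xy. ennreal (?P xy))"
      by (simp add: split_beta')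
    finally have prodPY: "PX \<Otimes>\<^sub>M distr M borel (\<lambda>\<omega>. f \<theta> (X \<omega>) + Z \<omega>) = density (PX \<Otimes>\<^sub>M lborel) (\<lambda>xy. ennreal (?P xy))" .
    have jointd: "distr M (borel \<Otimes>\<^sub>M borel) (\<lambda>\<omega>. (X \<omega>, f \<theta> (X \<omega>) + Z \<omega>)) = density (PX \<Otimes>\<^sub>M lborel) (\<lambda>xy. ennreal (?G xy))"
      unfolding joint by (simp add: split_beta')
      have int1: "integrable (PX \<Otimes>\<^sub>M lborel) (\<lambda>xy. ?G xy * ln (?G xy))"
        unfolding integrable_iff_bounded
      proof
        show "(\<lambda>xy. ?G xy * ln (?G xy)) \<in> borel_measurable (PX \<Otimes>\<^sub>M lborel)" by measurable
        have "(\<integral>\<^sup>+xy. ennreal (norm (?G xy * ln (?G xy))) \<partial>(PX \<Otimes>\<^sub>M lborel)) =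
            (\<integral>\<^sup>+x. (\<integral>\<^sup>+y. ennreal (norm (gauss_dens t (y - f \<theta> x) * ln (gauss_dens t (y - f \<theta> x)))) \<partial>lborel) \<partial>PX)"
          using lborel.nn_integral_fst[of "\<lambda>xy. ennreal (norm (?G xy * ln (?G xy)))" PX] by simp
        also have "\<dots> = (\<integral>\<^sup>+x. (\<integral>\<^sup>+y. ennreal (norm (gauss_dens t (y::real^'m) * ln (gauss_dens t y))) \<partial>lborel) \<partial>PX)"
        proof (rule nn_integral_cong)
          fix x
          have mm: "(\<lambda>y. ennreal (norm (gauss_dens t (y::real^'m) * ln (gauss_dens t y)))) \<in> borel_measurable borel"
            by measurable
          show "(\<integral>\<^sup>+y. ennreal (norm (gauss_dens t (y - f \<theta> x) * ln (gauss_dens t (y - f \<theta> x)))) \<partial>lborel) =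
              (\<integral>\<^sup>+y. ennreal (norm (gauss_dens t (y::real^'m) * ln (gauss_dens t y))) \<partial>lborel)"
            using lborel_nn_integral_translate[OF mm, of "- f \<theta> x"] by simp
        qed
        also have "\<dots> = (\<integral>\<^sup>+y. ennreal (norm (gauss_dens t (y::real^'m) * ln (gauss_dens t y))) \<partial>lborel)"
          by (simp add: PX.emeasure_space_1)
        also have "\<dots> < \<infinity>" using gln_int unfolding integrable_iff_bounded by simp
        finally show "(\<integral>\<^sup>+xy. ennreal (norm (?G xy * ln (?G xy))) \<partial>(PX \<Otimes>\<^sub>M lborel)) < \<infinity>" .
      qed
      have int2: "integrable (PX \<Otimes>\<^sub>M lborel) (\<lambda>xy. ?G xy * ln (?P xy))"
        unfolding integrable_iff_bounded
      proof
        show "(\<lambda>xy. ?G xy * ln (?P xy)) \<in> borel_measurable (PX \<Otimes>\<^sub>M lborel)" by measurable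
        have "(\<integral>\<^sup>+xy. ennreal (norm (?G xy * ln (?P xy))) \<partial>(PX \<Otimes>\<^sub>M lborel)) =
            (\<integral>\<^sup>+y. (\<integral>\<^sup>+x. ennreal (gauss_dens t (y - f \<theta> x)) * ennreal \<bar>ln (p \<theta> y)\<bar> \<partial>PX) \<partial>lborel)"
          using PXL.nn_integral_snd[of "\<lambda>xy. ennreal (norm (?G xy * ln (?P xy)))"]
          by (simp add: abs_mult abs_of_pos[OF gpos] ennreal_mult)
        also have "\<dots> = (\<integral>\<^sup>+y. ennreal (norm (p \<theta> y * ln (p \<theta> y))) \<partial>lborel)"
        proof (rule nn_integral_cong)
          fix y
          have "(\<integral>\<^sup>+x. ennreal (gauss_dens t (y - f \<theta> x)) \<partial>PX) = ennreal (p \<theta> y)"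
            unfolding p_eq using pint by (subst nn_integral_eq_integral) (auto intro: less_imp_le[OF gpos])
          then show "(\<integral>\<^sup>+x. ennreal (gauss_dens t (y - f \<theta> x)) * ennreal \<bar>ln (p \<theta> y)\<bar> \<partial>PX) =
              ennreal (norm (p \<theta> y * ln (p \<theta> y)))"
            by (simp add: nn_integral_multc abs_mult abs_of_pos[OF p_pos] ennreal_mult)
        qed
        also have "\<dots> < \<infinity>" using int_ent[of \<theta>] unfolding integrable_iff_bounded by simp
        finally show "(\<integral>\<^sup>+xy. ennreal (norm (?G xy * ln (?P xy))) \<partial>(PX \<Otimes>\<^sub>M lborel)) < \<infinity>" .
      qed
    have "M.mutual_information (exp 1) borel borel X (\<lambda>\<omega>. f \<theta> (X \<omega>) + Z \<omega>) =
        KL_divergence (exp 1) (density (PX \<Otimes>\<^sub>M lborel) (\<lambda>xy. ennreal (?P xy))) (density (PX \<Otimes>\<^sub>M lborel) (\<lambda>xy. ennreal (?G xy)))"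
      unfolding M.mutual_information_def PX_def[symmetric] prodPY jointd ..
    also have "\<dots> = (\<integral>xy. ?G xy * log (exp 1) (?G xy / ?P xy) \<partial>(PX \<Otimes>\<^sub>M lborel))"
      by (rule PXL.KL_density_density) (auto intro: less_imp_le[OF gpos] less_imp_le[OF p_pos] simp: p_ne)
    also have "\<dots> = (\<integral>xy. ?G xy * ln (?G xy) - ?G xy * ln (?P xy) \<partial>(PX \<Otimes>\<^sub>M lborel))"
      by (rule Bochner_Integration.integral_cong) (auto simp: log_def ln_div gpos p_pos right_diff_distrib)
    also have "\<dots> = (\<integral>xy. ?G xy * ln (?G xy) \<partial>(PX \<Otimes>\<^sub>M lborel)) - (\<integral>xy. ?G xy * ln (?P xy) \<partial>(PX \<Otimes>\<^sub>M lborel))"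
    proof (rule Bochner_Integration.integral_diff)
      show "integrable (PX \<Otimes>\<^sub>M lborel) (\<lambda>xy. ?G xy * ln (?G xy))" by fact
      show "integrable (PX \<Otimes>\<^sub>M lborel) (\<lambda>xy. ?G xy * ln (?P xy))" by fact
    qed
    also have "(\<integral>xy. ?G xy * ln (?G xy) \<partial>(PX \<Otimes>\<^sub>M lborel)) = CG"
    proof -
      have "(\<integral>xy. ?G xy * ln (?G xy) \<partial>(PX \<Otimes>\<^sub>M lborel)) =
          (\<integral>x. (\<integral>y. gauss_dens t (y - f \<theta> x) * ln (gauss_dens t (y - f \<theta> x)) \<partial>lborel) \<partial>PX)"
        using PXL.integral_fst'[OF int1] by simp
      also have "\<dots> = (\<integral>x. CG \<partial>PX)"
      proof (rule Bochner_Integration.integral_cong[OF refl])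
        fix x
        have mm: "(\<lambda>y. gauss_dens t (y::real^'m) * ln (gauss_dens t y)) \<in> borel_measurable borel"
          by measurable
        show "(\<integral>y. gauss_dens t (y - f \<theta> x) * ln (gauss_dens t (y - f \<theta> x)) \<partial>lborel) = CG"
          using lborel_integral_translate[OF mm, of "- f \<theta> x"] by (simp add: CG_def)
      qed
      also have "\<dots> = CG" by simp
      finally show ?thesis .
    qed
    also have "(\<integral>xy. ?G xy * ln (?P xy) \<partial>(PX \<Otimes>\<^sub>M lborel)) = (\<integral>y. p \<theta> y * ln (p \<theta> y) \<partial>lborel)"
    proof -
      have eqf: "(\<lambda>(x, y). gauss_dens t (y - f \<theta> x) * ln (p \<theta> y)) = (\<lambda>xy. ?G xy * ln (?P xy))"
        by (auto simp: fun_eq_iff)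
      have "(\<integral>xy. ?G xy * ln (?P xy) \<partial>(PX \<Otimes>\<^sub>M lborel)) =
          (\<integral>y. (\<integral>x. gauss_dens t (y - f \<theta> x) * ln (p \<theta> y) \<partial>PX) \<partial>lborel)"
        using PXL.integral_snd[of "\<lambda>x y. gauss_dens t (y - f \<theta> x) * ln (p \<theta> y)"] int2 unfolding eqf by simp
      also have "\<dots> = (\<integral>y. p \<theta> y * ln (p \<theta> y) \<partial>lborel)"
        by (rule Bochner_Integration.integral_cong[OF refl]) (simp only: integral_mult_left_zero p_eq)
      finally show ?thesis .
    qed
    finally show ?thesis .
  qed

  define Dp where "Dp y h = (\<integral>x. gauss_dens t (y - f \<eta> x) * (((y - f \<eta> x) \<bullet> Df \<eta> x h) / t) \<partial>PX)" for y h
  have gcomp: "((\<lambda>\<theta>. gauss_dens t (y - f \<theta> x)) has_derivative (\<lambda>h. gauss_dens t (y - f \<eta> x) * (((y - f \<eta> x) \<bullet> Df \<eta> x h) / t))) (at \<eta>)" for y x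
  proof -
    have "((\<lambda>\<theta>. gauss_dens t (y - f \<theta> x)) has_derivative (\<lambda>h. - gauss_dens t (y - f \<eta> x) * (((y - f \<eta> x) \<bullet> (0 - Df \<eta> x h)) / t))) (at \<eta>)"
      by (rule has_derivative_compose[OF has_derivative_diff[OF has_derivative_const f_diff] gauss_deriv])
    then show ?thesis by (simp add: inner_diff_right)
  qed
  have Dp_deriv: "((\<lambda>\<theta>. p \<theta> y) has_derivative Dp y) (at \<eta>)"
    and Dp_int: "integrable PX (\<lambda>x. gauss_dens t (y - f \<eta> x) * (((y - f \<eta> x) \<bullet> Df \<eta> x h) / t))" for y h
  proof -
    have *: "(\<forall>h. integrable PX (\<lambda>x. gauss_dens t (y - f \<eta> x) * (((y - f \<eta> x) \<bullet> Df \<eta> x h) / t))) \<and>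
        ((\<lambda>\<theta>. \<integral>x. gauss_dens t (y - f \<theta> x) \<partial>PX) has_derivative (\<lambda>h. \<integral>x. gauss_dens t (y - f \<eta> x) * (((y - f \<eta> x) \<bullet> Df \<eta> x h) / t) \<partial>PX)) (at \<eta>)"
      by (rule dui_apply[OF ex_p[of y \<eta>]]) (rule gcomp)
    then show "((\<lambda>\<theta>. p \<theta> y) has_derivative Dp y) (at \<eta>)"
      unfolding p_eq Dp_def[abs_def] by simp
    from * show "integrable PX (\<lambda>x. gauss_dens t (y - f \<eta> x) * (((y - f \<eta> x) \<bullet> Df \<eta> x h) / t))" by blast
  qed
  have Dp_lint: "integrable lborel (\<lambda>y. Dp y h)" and Dp_zero: "(\<integral>y. Dp y h \<partial>lborel) = 0" for h
  proof -
    have *: "(\<forall>h. integrable lborel (\<lambda>y. Dp y h)) \<and>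
        ((\<lambda>\<theta>. \<integral>y. p \<theta> y \<partial>lborel) has_derivative (\<lambda>h. \<integral>y. Dp y h \<partial>lborel)) (at \<eta>)"
      by (rule dui_apply[OF ex_int_p[of \<eta>]]) (rule Dp_deriv)
    then show "integrable lborel (\<lambda>y. Dp y h)" by blast
    from * have "((\<lambda>\<theta>. 1) has_derivative (\<lambda>h. \<integral>y. Dp y h \<partial>lborel)) (at \<eta>)"
      by (simp add: p_one)
    from has_derivative_unique[OF this has_derivative_const]
    show "(\<integral>y. Dp y h \<partial>lborel) = 0" by (simp add: fun_eq_iff)
  qed
  define De where "De y h = Dp y h * ln (p \<eta> y) + Dp y h" for y h
  have De_deriv: "((\<lambda>\<theta>. p \<theta> y * ln (p \<theta> y)) has_derivative De y) (at \<eta>)" for y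
  proof -
    have "((\<lambda>\<theta>. ln (p \<theta> y)) has_derivative (\<lambda>h. inverse (p \<eta> y) * Dp y h)) (at \<eta>)"
      using has_derivative_compose[OF Dp_deriv[of y], of ln "(*) (inverse (p \<eta> y))"]
        DERIV_ln[OF p_pos[of \<eta> y]] unfolding has_field_derivative_def by simp
    from has_derivative_mult[OF Dp_deriv[of y] this]
    show ?thesis
      by (rule has_derivative_eq_rhs) (simp add: fun_eq_iff De_def field_simps)
  qed
  have De_facts: "(\<forall>h. integrable lborel (\<lambda>y. De y h)) \<and>
      ((\<lambda>\<theta>. \<integral>y. p \<theta> y * ln (p \<theta> y) \<partial>lborel) has_derivative (\<lambda>h. \<integral>y. De y h \<partial>lborel)) (at \<eta>)"
    by (rule dui_apply[OF ex_ent[of \<eta>]]) (rule De_deriv)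
  have DpL_int: "integrable lborel (\<lambda>y. Dp y h * ln (p \<eta> y))" for h
  proof -
    have "integrable lborel (\<lambda>y. De y h - Dp y h)"
      using De_facts Dp_lint[of h] by (intro Bochner_Integration.integrable_diff) auto
    then show ?thesis by (simp add: De_def)
  qed
  have De_int_eq: "(\<integral>y. De y h \<partial>lborel) = (\<integral>y. Dp y h * ln (p \<eta> y) \<partial>lborel)" for h
    unfolding De_def using DpL_int Dp_lint by (simp add: Dp_zero)
  have MI_deriv: "((\<lambda>\<theta>. M.mutual_information (exp 1) borel borel X (\<lambda>\<omega>. f \<theta> (X \<omega>) + Z \<omega>)) has_derivative
      (\<lambda>h. - (\<integral>y. Dp y h * ln (p \<eta> y) \<partial>lborel))) (at \<eta>)"
  proof -
    have "((\<lambda>\<theta>. CG - (\<integral>y. p \<theta> y * ln (p \<theta> y) \<partial>lborel)) has_derivative (\<lambda>h. 0 - (\<integral>y. De y h \<partial>lborel))) (at \<eta>)"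
      using De_facts by (intro has_derivative_diff has_derivative_const) auto
    then show ?thesis unfolding MI by (simp add: De_int_eq)
  qed
  define V where "V \<omega> = transpose (matrix (Df \<eta> (X \<omega>))) *v s \<eta> (f \<eta> (X \<omega>) + Z \<omega>)" for \<omega>
  have sgrad: "GDERIV (\<lambda>u. ln (p \<eta> u)) z :> s \<eta> z" for z
    unfolding s_def score_def p_def
    by (rule someI_ex[OF gderiv_exists]) (rule p_diff_y[of \<eta> z, unfolded p_def])
  have sm[measurable]: "(\<lambda>y. s \<eta> y $ i) \<in> borel_measurable borel" for i
  proof -
    have "(\<lambda>y. (\<lambda>k. k \<bullet> s \<eta> y) (axis i 1)) \<in> borel_measurable borel"
    proof (rule deriv_meas[where F="\<lambda>\<theta> y. ln (p \<eta> (y + \<theta>))" and q=0])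
      fix y :: "real^'m"
      have "((\<lambda>u. ln (p \<eta> u)) has_derivative (\<lambda>k. k \<bullet> s \<eta> (y + 0))) (at (y + 0))"
        using sgrad[of "y + 0"] unfolding gderiv_def .
      from has_derivative_compose[OF has_derivative_add[OF has_derivative_const has_derivative_ident] this]
      show "((\<lambda>\<theta>. ln (p \<eta> (y + \<theta>))) has_derivative (\<lambda>k. k \<bullet> s \<eta> y)) (at 0)" by simp
    next
      fix \<theta> :: "real^'m"
      show "(\<lambda>y. ln (p \<eta> (y + \<theta>))) \<in> borel_measurable borel" by measurable
    qed
    then show ?thesis by (simp add: inner_axis')
  qed
  have dfm[measurable]: "(\<lambda>x. Df \<eta> x k $ i) \<in> borel_measurable borel" for k i
  proof (rule deriv_meas[where F="\<lambda>\<theta> x. f \<theta> x $ i" and q=\<eta> and D="\<lambda>x k. Df \<eta> x k $ i"])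
    fix x
    show "((\<lambda>\<theta>. f \<theta> x $ i) has_derivative (\<lambda>k. Df \<eta> x k $ i)) (at \<eta>)"
      by (rule bounded_linear.has_derivative[OF bounded_linear_vec_nth f_diff])
  qed simp
  have sv_meas[measurable]: "(\<lambda>y. v \<bullet> s \<eta> y) \<in> borel_measurable borel" for v
    unfolding inner_vec_def by measurable
  define H where "H h x z = s \<eta> (f \<eta> x + z) \<bullet> Df \<eta> x h" for h x z
  have J: "(\<integral>y. gauss_dens t (y - b0) * (((y - b0) \<bullet> v) / t) * ln (p \<eta> y) \<partial>lborel) =
      (\<integral>\<omega>. v \<bullet> s \<eta> (b0 + Z \<omega>) \<partial>M)" for b0 v
  proof -
    have d1: "((\<lambda>b. gauss_dens t (y - b) * ln (p \<eta> y)) has_derivative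
        (\<lambda>v. gauss_dens t (y - b0) * (((y - b0) \<bullet> v) / t) * ln (p \<eta> y))) (at b0)" for y
    proof -
      have "((\<lambda>b. gauss_dens t (y - b)) has_derivative (\<lambda>v. - gauss_dens t (y - b0) * (((y - b0) \<bullet> (0 - v)) / t))) (at b0)"
        by (rule has_derivative_compose[OF has_derivative_diff[OF has_derivative_const has_derivative_ident] gauss_deriv])
      from has_derivative_mult[OF this has_derivative_const[of "ln (p \<eta> y)"]]
      show ?thesis by (rule has_derivative_eq_rhs) (simp add: fun_eq_iff inner_diff_right)
    qed
    have d2: "((\<lambda>b. gauss_dens t u * ln (p \<eta> (u + b))) has_derivative
        (\<lambda>v. gauss_dens t u * (v \<bullet> s \<eta> (u + b0)))) (at b0)" for u
    proof -
      have "((\<lambda>u. ln (p \<eta> u)) has_derivative (\<lambda>k. k \<bullet> s \<eta> (u + b0))) (at (u + b0))"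
        using sgrad[of "u + b0"] unfolding gderiv_def .
      from has_derivative_compose[OF has_derivative_add[OF has_derivative_const has_derivative_ident] this]
      have "((\<lambda>b. ln (p \<eta> (u + b))) has_derivative (\<lambda>k. k \<bullet> s \<eta> (u + b0))) (at b0)" by simp
      from has_derivative_mult[OF has_derivative_const[of "gauss_dens t u"] this]
      show ?thesis by (rule has_derivative_eq_rhs) (simp add: fun_eq_iff)
    qed
    have e1: "(\<forall>v. integrable lborel (\<lambda>y. gauss_dens t (y - b0) * (((y - b0) \<bullet> v) / t) * ln (p \<eta> y))) \<and>
        ((\<lambda>b. \<integral>y. gauss_dens t (y - b) * ln (p \<eta> y) \<partial>lborel) has_derivative
          (\<lambda>v. \<integral>y. gauss_dens t (y - b0) * (((y - b0) \<bullet> v) / t) * ln (p \<eta> y) \<partial>lborel)) (at b0)"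
      by (rule dui_apply[OF ex_shift1[of \<eta> b0]]) (rule d1)
    have e2: "(\<forall>v. integrable lborel (\<lambda>u. gauss_dens t u * (v \<bullet> s \<eta> (u + b0)))) \<and>
        ((\<lambda>b. \<integral>u. gauss_dens t u * ln (p \<eta> (u + b)) \<partial>lborel) has_derivative
          (\<lambda>v. \<integral>u. gauss_dens t u * (v \<bullet> s \<eta> (u + b0)) \<partial>lborel)) (at b0)"
      by (rule dui_apply[OF ex_shift2[of \<eta> b0]]) (rule d2)
    have eqB: "(\<lambda>b. \<integral>y. gauss_dens t (y - b) * ln (p \<eta> y) \<partial>lborel) = (\<lambda>b. \<integral>u. gauss_dens t u * ln (p \<eta> (u + b)) \<partial>lborel)"
    proof
      fix b :: "real^'m"
      have mm: "(\<lambda>y. gauss_dens t (y - b) * ln (p \<eta> y)) \<in> borel_measurable borel" by measurable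
      show "(\<integral>y. gauss_dens t (y - b) * ln (p \<eta> y) \<partial>lborel) = (\<integral>u. gauss_dens t u * ln (p \<eta> (u + b)) \<partial>lborel)"
        using lborel_integral_translate[OF mm, of b] by simp
    qed
    have "(\<lambda>v. \<integral>y. gauss_dens t (y - b0) * (((y - b0) \<bullet> v) / t) * ln (p \<eta> y) \<partial>lborel) =
        (\<lambda>v. \<integral>u. gauss_dens t u * (v \<bullet> s \<eta> (u + b0)) \<partial>lborel)"
      using e1 e2 unfolding eqB by (intro has_derivative_unique) auto
    then have "(\<integral>y. gauss_dens t (y - b0) * (((y - b0) \<bullet> v) / t) * ln (p \<eta> y) \<partial>lborel) =
        (\<integral>u. gauss_dens t u * (v \<bullet> s \<eta> (u + b0)) \<partial>lborel)"
      by (rule fun_cong)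
    also have "\<dots> = (\<integral>u. v \<bullet> s \<eta> (u + b0) \<partial>density lborel (\<lambda>z. ennreal (gauss_dens t z)))"
      by (subst integral_density) auto
    also have "\<dots> = (\<integral>\<omega>. v \<bullet> s \<eta> (Z \<omega> + b0) \<partial>M)"
      unfolding PZ[symmetric] by (subst integral_distr) (auto simp: distributed_measurable[OF Z])
    finally show ?thesis by (simp add: add.commute)
  qed
  have lin: "bounded_linear (Df \<eta> x)" for x by (rule has_derivative_bounded_linear[OF f_diff])
  have mv: "matrix (Df \<eta> x) *v k = Df \<eta> x k" for x k
    using matrix_vector_mul(3)[OF lin[of x]] by metis
  have VH: "V \<omega> \<bullet> h = H h (X \<omega>) (Z \<omega>)" for \<omega> h
    by (simp add: V_def H_def dot_lmul_matrix mv)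
  have Hm[measurable]: "(\<lambda>xz. H h (fst xz) (snd xz)) \<in> borel_measurable (borel \<Otimes>\<^sub>M borel)" for h
    unfolding H_def inner_vec_def by measurable
  have Hm1[measurable]: "H h x \<in> borel_measurable borel" for h x
    unfolding H_def inner_vec_def by measurable
  have Hint: "integrable M (\<lambda>\<omega>. H h (X \<omega>) (Z \<omega>))" for h
  proof -
    have "integrable M (\<lambda>\<omega>. V \<omega> \<bullet> h)"
      using int_grad[of \<eta>] unfolding V_def by auto
    then show ?thesis by (simp add: VH)
  qed
  have G: "(\<integral>y. Dp y h * ln (p \<eta> y) \<partial>lborel) = (\<integral>\<omega>. V \<omega> \<partial>M) \<bullet> h" for h
  proof -
    have "(\<integral>y. Dp y h * ln (p \<eta> y) \<partial>lborel) =
        (\<integral>y. (\<integral>x. gauss_dens t (y - f \<eta> x) * (((y - f \<eta> x) \<bullet> Df \<eta> x h) / t) * ln (p \<eta> y) \<partial>PX) \<partial>lborel)"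
      by (simp add: Dp_def)
    also have "\<dots> = (\<integral>x. (\<integral>y. gauss_dens t (y - f \<eta> x) * (((y - f \<eta> x) \<bullet> Df \<eta> x h) / t) * ln (p \<eta> y) \<partial>lborel) \<partial>PX)"
      by (rule PXL.Fubini_integral[OF fubini[of \<eta> h]])
    also have "\<dots> = (\<integral>x. (\<integral>\<omega>. H h x (Z \<omega>) \<partial>M) \<partial>PX)"
      by (rule Bochner_Integration.integral_cong[OF refl], subst J) (simp add: H_def inner_commute)
    also have "\<dots> = (\<integral>x. (\<integral>z. H h x z \<partial>distr M borel Z) \<partial>PX)"
      by (rule Bochner_Integration.integral_cong[OF refl]) (simp add: integral_distr)
    also have "\<dots> = (\<integral>xz. H h (fst xz) (snd xz) \<partial>(PX \<Otimes>\<^sub>M distr M borel Z))"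
    proof -
      have "integrable (distr M (borel \<Otimes>\<^sub>M borel) (\<lambda>\<omega>. (X \<omega>, Z \<omega>))) (\<lambda>xz. H h (fst xz) (snd xz))"
        using Hint[of h] by (subst integrable_distr_eq) auto
      then have "integrable (PX \<Otimes>\<^sub>M distr M borel Z) (\<lambda>xz. H h (fst xz) (snd xz))" by (simp add: XZ)
      from PXZ.integral_fst'[OF this] show ?thesis by simp
    qed
    also have "\<dots> = (\<integral>\<omega>. H h (X \<omega>) (Z \<omega>) \<partial>M)"
      unfolding XZ[symmetric] by (subst integral_distr) auto
    also have "\<dots> = (\<integral>\<omega>. V \<omega> \<bullet> h \<partial>M)" by (simp add: VH)
    also have "\<dots> = (\<integral>\<omega>. V \<omega> \<partial>M) \<bullet> h"
      using int_grad[of \<eta>] unfolding V_def by (intro integral_inner_left) auto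
    finally show ?thesis .
  qed
  show ?thesis
    unfolding gderiv_def
  proof (rule has_derivative_eq_rhs[OF MI_deriv])
    show "(\<lambda>h. - (\<integral>y. Dp y h * ln (p \<eta> y) \<partial>lborel)) = (\<lambda>h. h \<bullet> - (\<integral>\<omega>. transpose (matrix (Df \<eta> (X \<omega>))) *v s \<eta> (f \<eta> (X \<omega>) + Z \<omega>) \<partial>M))"
      by (simp add: fun_eq_iff G V_def inner_commute)
  qed
qed

end
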